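(* Let $m>n$ be coprime positive integers. For $(\lambda,k)\in X\times\mathbb Z$ define $x(\lambda,k)=\nu^{-k}x(\lambda)+k\,\mathbf m\in\mathbb Z^{n|m}$. Then $x(\overline\lambda,k+1)=x(\lambda,k)$ whenever $\lambda_1=m$, so $x$ induces a map $[X\times\mathbb Z]\to\mathbb Z^{n|m}$; this induced map is injective and its image is exactly the $\mathfrak T_{iso}$-orbit $\mathcal O$ of $\Lambda_0$.
   Context: $X$ is the set of partitions $\lambda=(\lambda_1\ge\dots\ge\lambda_n\ge0)$ with $\lambda_1\le m$; $\lambda'_j=\#\{i:\lambda_i\ge j\}$ for $j\in[m]$. For $\lambda\in X$ with $\lambda_1=m$ put $\overline\lambda=(\lambda_2,\dots,\lambda_n,0)$. Let $\sim$ be the smallest equivalence relation on $X\times\mathbb Z$ with $(\lambda,k)\sim(\overline\lambda,k+1)$ whenever $\lambda_1=m$, and $[X\times\mathbb Z]$ the set of equivalence classes. Elements of $\mathbb Z^{n|m}$ are written $\Lambda=(a_1,\dots,a_n|b_1,\dots,b_m)$, identified with $\sum_i a_i\epsilon_i-\sum_j b_j\delta_j$. For $\lambda\in X$, $x(\lambda)=(a_1,\dots,a_n|b_1,\dots,b_m)$ with $a_i=m(n-i)+n\lambda_{n+1-i}$ and $b_j=n(j-1)+m\lambda'_j$. $\nu$ is the linear map with $\nu(a_1,\dots,a_n|b)=(a_n,a_1,\dots,a_{n-1}|b)$ (i.e. $\nu\epsilon_i=\epsilon_{i+1}$ indices mod $n$, $\nu\delta_j=\delta_j$), and $\mathbf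 m=(m,\dots,m|m,\dots,m)$. $\Lambda_0=x(\emptyset)=(m(n-1),m(n-2),\dots,m,0\,|\,0,n,2n,\dots,n(m-1))$. For $\alpha=\epsilon_i-\delta_j$ ($i\in[n],j\in[m]$) let $\Pi_\alpha=\{\Lambda: a_i=b_j\}$, $\Pi_{-\alpha}=\{\Lambda:a_i-b_j=n-m\}$, and let $\tau_\alpha:\Pi_\alpha\to\Pi_{-\alpha}$ be $\Lambda\mapsto\Lambda+n\epsilon_i-m\delta_j$ (add $n$ to $a_i$ and $m$ to $b_j$), with inverse $\tau_{-\alpha}$. The $\mathfrak T_{iso}$-orbit of $\Lambda_0$ is the set of all elements obtained from $\Lambda_0$ by finite sequences of maps $\tau_{\pm\alpha}$, each applied to an element of its domain $\Pi_{\pm\alpha}$. *)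

theory Defs
  imports Main
begin

text \<open>Partitions with at most n parts (padded with zeros to length exactly n),
  represented as lists lam = [lam_1, ..., lam_n], weakly decreasing, entries \<le> m.\<close>
definition partX :: "nat \<Rightarrow> nat \<Rightarrow> nat list set" where
  "partX n m = {lam. length lam = n \<and> sorted_wrt (\<ge>) lam \<and> (\<forall>x\<in>set lam. x \<le> m)}"

text \<open>lambda_i for i in [n] (1-indexed).\<close>
definition part_at :: "nat list \<Rightarrow> nat \<Rightarrow> nat" where
  "part_at lam i = lam ! (i - 1)"

definition conj_at :: "nat list \<Rightarrow> nat \<Rightarrow> nat" where
  "conj_at lam j = card {i \<in> {1..length lam}. part_at lam i \<ge> j}"

definition pbar :: "nat list \<Rightarrow> nat list" where
  "pbar lam = tl lam @ [0]"

definition gen_rel :: "nat \<Rightarrow> nat \<Rightarrow> nat list \<times> int \<Rightarrow> nat list \<times> int \<Rightarrow> bool" where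
  "gen_rel n m p q \<longleftrightarrow> fst p \<in> partX n m \<and> part_at (fst p) 1 = m \<and> q = (pbar (fst p), snd p + 1)"

definition simX :: "nat \<Rightarrow> nat \<Rightarrow> nat list \<times> int \<Rightarrow> nat list \<times> int \<Rightarrow> bool" where
  "simX n m = equivclp (gen_rel n m)"

text \<open>Elements of Z^{n|m}: pairs (a, b) with a = [a_1..a_n], b = [b_1..b_m].\<close>
type_synonym wt = "int list \<times> int list"

definition xmap :: "nat \<Rightarrow> nat \<Rightarrow> nat list \<Rightarrow> wt" where
  "xmap n m lam =
     (map (\<lambda>i. int (m * (n - i) + n * part_at lam (n + 1 - i))) [1..<n+1],
      map (\<lambda>j. int (n * (j - 1) + m * conj_at lam j)) [1..<m+1])"

definition nu :: "wt \<Rightarrow> wt" where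
  "nu L = (if fst L = [] then [] else last (fst L) # butlast (fst L), snd L)"

definition nu_inv :: "wt \<Rightarrow> wt" where
  "nu_inv L = (rotate1 (fst L), snd L)"

definition nu_pow :: "int \<Rightarrow> wt \<Rightarrow> wt" where
  "nu_pow j = (if j \<ge> 0 then nu ^^ nat j else nu_inv ^^ nat (- j))"

definition xk :: "nat \<Rightarrow> nat \<Rightarrow> nat list \<times> int \<Rightarrow> wt" where
  "xk n m p = (let L = nu_pow (- snd p) (xmap n m (fst p)) in
      (map (\<lambda>a. a + snd p * int m) (fst L), map (\<lambda>b. b + snd p * int m) (snd L)))"

definition Lambda0 :: "nat \<Rightarrow> nat \<Rightarrow> wt" where
  "Lambda0 n m = xmap n m (replicate n 0)"

text \<open>For alpha = eps_i - delta_j (1-indexed i \<in> [n], j \<in> [m]).\<close>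
definition Pi_pos :: "nat \<Rightarrow> nat \<Rightarrow> wt \<Rightarrow> bool" where
  "Pi_pos i j L \<longleftrightarrow> fst L ! (i - 1) = snd L ! (j - 1)"

definition Pi_neg :: "nat \<Rightarrow> nat \<Rightarrow> nat \<Rightarrow> nat \<Rightarrow> wt \<Rightarrow> bool" where
  "Pi_neg n m i j L \<longleftrightarrow> fst L ! (i - 1) - snd L ! (j - 1) = int n - int m"

definition tau_pos :: "nat \<Rightarrow> nat \<Rightarrow> nat \<Rightarrow> nat \<Rightarrow> wt \<Rightarrow> wt" where
  "tau_pos n m i j L = ((fst L)[i - 1 := fst L ! (i - 1) + int n], (snd L)[j - 1 := snd L ! (j - 1) + int m])"

definition tau_neg :: "nat \<Rightarrow> nat \<Rightarrow> nat \<Rightarrow> nat \<Rightarrow> wt \<Rightarrow> wt" where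
  "tau_neg n m i j L = ((fst L)[i - 1 := fst L ! (i - 1) - int n], (snd L)[j - 1 := snd L ! (j - 1) - int m])"

inductive_set orbit :: "nat \<Rightarrow> nat \<Rightarrow> wt set" for n m where
  base: "Lambda0 n m \<in> orbit n m"
| pos: "\<lbrakk>L \<in> orbit n m; i \<in> {1..n}; j \<in> {1..m}; Pi_pos i j L\<rbrakk> \<Longrightarrow> tau_pos n m i j L \<in> orbit n m"
| neg: "\<lbrakk>L \<in> orbit n m; i \<in> {1..n}; j \<in> {1..m}; Pi_neg n m i j L\<rbrakk> \<Longrightarrow> tau_neg n m i j L \<in> orbit n m"

end

theory Submission
  imports Defs
begin


lemma nu_props:
  assumes "length (fst X) = n" "0 < n"
  shows "length (fst (nu X)) = n" "snd (nu X) = snd X"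
    "\<And>p. p < n \<Longrightarrow> fst (nu X) ! p = fst X ! nat ((int p - 1) mod int n)"
proof -
  have ne: "fst X \<noteq> []" using assms by auto
  show "length (fst (nu X)) = n" "snd (nu X) = snd X" using ne assms by (auto simp: nu_def)
  fix p assume p: "p < n"
  show "fst (nu X) ! p = fst X ! nat ((int p - 1) mod int n)"
  proof (cases p)
    case 0
    have "nat ((int p - 1) mod int n) = n - 1" using 0 assms
      by (simp add: zmod_minus1 nat_diff_distrib)
    then show ?thesis using 0 ne assms by (simp add: nu_def last_conv_nth)
  next
    case (Suc q)
    have "nat ((int p - 1) mod int n) = q" using Suc p by simp
    then show ?thesis using Suc ne assms p by (simp add: nu_def nth_butlast)
  qed
qed

lemma nu_inv_props:
  assumes "length (fst X) = n" "0 < n"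
  shows "length (fst (nu_inv X)) = n" "snd (nu_inv X) = snd X"
    "\<And>p. p < n \<Longrightarrow> fst (nu_inv X) ! p = fst X ! nat ((int p + 1) mod int n)"
proof -
  show "length (fst (nu_inv X)) = n" "snd (nu_inv X) = snd X" using assms by (auto simp: nu_inv_def)
  fix p assume p: "p < n"
  have "nat ((int p + 1) mod int n) = Suc p mod n"
    by (metis nat_int of_nat_Suc of_nat_mod add.commute)
  then show "fst (nu_inv X) ! p = fst X ! nat ((int p + 1) mod int n)"
    using assms p by (simp add: nu_inv_def nth_rotate1)
qed

lemma nu_pow_nat:
  assumes "length (fst X) = n" "0 < n"
  shows "length (fst ((nu ^^ t) X)) = n \<and> snd ((nu ^^ t) X) = snd X \<and>
    (\<forall>p<n. fst ((nu ^^ t) X) ! p = fst X ! nat ((int p - int t) mod int n))"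
proof (induction t)
  case 0
  then show ?case using assms by simp
next
  case (Suc t)
  let ?Y = "(nu ^^ t) X"
  have Y: "length (fst ?Y) = n" "snd ?Y = snd X" using Suc by auto
  show ?case
  proof (intro conjI allI impI)
    show "length (fst ((nu ^^ Suc t) X)) = n" using nu_props(1)[OF Y(1) assms(2)] by simp
    show "snd ((nu ^^ Suc t) X) = snd X" using nu_props(2)[OF Y(1) assms(2)] Y by simp
    fix p assume p: "p < n"
    have q: "nat ((int p - 1) mod int n) < n" using assms(2) by (simp add: nat_less_iff)
    have "fst ((nu ^^ Suc t) X) ! p = fst ?Y ! nat ((int p - 1) mod int n)"
      using nu_props(3)[OF Y(1) assms(2) p] by simp
    also have "\<dots> = fst X ! nat ((int (nat ((int p - 1) mod int n)) - int t) mod int n)"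
      using Suc q by blast
    also have "int (nat ((int p - 1) mod int n)) = (int p - 1) mod int n" using assms(2) by simp
    also have "((int p - 1) mod int n - int t) mod int n = (int p - int (Suc t)) mod int n"
      by (simp add: mod_diff_left_eq algebra_simps)
    finally show "fst ((nu ^^ Suc t) X) ! p = fst X ! nat ((int p - int (Suc t)) mod int n)" .
  qed
qed

lemma nu_inv_pow_nat:
  assumes "length (fst X) = n" "0 < n"
  shows "length (fst ((nu_inv ^^ t) X)) = n \<and> snd ((nu_inv ^^ t) X) = snd X \<and>
    (\<forall>p<n. fst ((nu_inv ^^ t) X) ! p = fst X ! nat ((int p + int t) mod int n))"
proof (induction t)
  case 0
  then show ?case using assms by simp
next
  case (Suc t)
  let ?Y = "(nu_inv ^^ t) X"
  have Y: "length (fst ?Y) = n" "snd ?Y = snd X" using Suc by auto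
  show ?case
  proof (intro conjI allI impI)
    show "length (fst ((nu_inv ^^ Suc t) X)) = n" using nu_inv_props(1)[OF Y(1) assms(2)] by simp
    show "snd ((nu_inv ^^ Suc t) X) = snd X" using nu_inv_props(2)[OF Y(1) assms(2)] Y by simp
    fix p assume p: "p < n"
    have q: "nat ((int p + 1) mod int n) < n" using assms(2) by (simp add: nat_less_iff)
    have "fst ((nu_inv ^^ Suc t) X) ! p = fst ?Y ! nat ((int p + 1) mod int n)"
      using nu_inv_props(3)[OF Y(1) assms(2) p] by simp
    also have "\<dots> = fst X ! nat ((int (nat ((int p + 1) mod int n)) + int t) mod int n)"
      using Suc q by blast
    also have "int (nat ((int p + 1) mod int n)) = (int p + 1) mod int n" using assms(2) by simp
    also have "((int p + 1) mod int n + int t) mod int n = (int p + int (Suc t)) mod int n"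
      by (metis mod_add_left_eq add.assoc of_nat_Suc add.commute)
    finally show "fst ((nu_inv ^^ Suc t) X) ! p = fst X ! nat ((int p + int (Suc t)) mod int n)" .
  qed
qed

lemma nu_pow_props:
  assumes "length (fst X) = n" "0 < n"
  shows "length (fst (nu_pow j X)) = n" "snd (nu_pow j X) = snd X"
    "\<And>p. p < n \<Longrightarrow> fst (nu_pow j X) ! p = fst X ! nat ((int p - j) mod int n)"
proof -
  have "length (fst (nu_pow j X)) = n \<and> snd (nu_pow j X) = snd X \<and>
    (\<forall>p<n. fst (nu_pow j X) ! p = fst X ! nat ((int p - j) mod int n))"
  proof (cases "j \<ge> 0")
    case True
    then show ?thesis using nu_pow_nat[OF assms, of "nat j"] by (simp add: nu_pow_def)
  next
    case False
    then show ?thesis using nu_inv_pow_nat[OF assms, of "nat (-j)"] by (simp add: nu_pow_def)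
  qed
  then show "length (fst (nu_pow j X)) = n" "snd (nu_pow j X) = snd X"
    "\<And>p. p < n \<Longrightarrow> fst (nu_pow j X) ! p = fst X ! nat ((int p - j) mod int n)" by auto
qed



definition rowf :: "nat \<Rightarrow> int \<Rightarrow> nat \<Rightarrow> nat" where
  "rowf n k i = n - nat ((int i + k - 1) mod int n)"

lemma xmap_len: "length (fst (xmap n m lam)) = n" "length (snd (xmap n m lam)) = m"
  by (simp_all add: xmap_def del: upt_Suc)

lemma xmap_fst_nth: "q < n \<Longrightarrow> fst (xmap n m lam) ! q = int (m * (n - Suc q) + n * part_at lam (n - q))"
  by (simp add: xmap_def del: upt_Suc)

lemma xmap_snd_nth: "p < m \<Longrightarrow> snd (xmap n m lam) ! p = int (n * p + m * conj_at lam (Suc p))"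
  by (simp add: xmap_def del: upt_Suc)

lemma xk_len:
  assumes "0 < n"
  shows "length (fst (xk n m (lam,k))) = n" "length (snd (xk n m (lam,k))) = m"
  using nu_pow_props(1,2)[OF xmap_len(1) assms, of "-k" m lam] xmap_len(2)[of n m lam]
  by (simp_all add: xk_def Let_def del: upt_Suc)

lemma xk_fst:
  assumes "0 < n" "i \<in> {1..n}"
  shows "fst (xk n m (lam,k)) ! (i-1) = int m * (int (rowf n k i) - 1)
           + int n * int (part_at lam (rowf n k i)) + k * int m"
proof -
  note l = xmap_len(1)[of n m lam]
  define q where "q = nat ((int (i-1) - (-k)) mod int n)"
  have qn: "q < n" using assms(1) by (simp add: q_def nat_less_iff)
  have r: "rowf n k i = n - q" using assms(2) by (simp add: rowf_def q_def algebra_simps of_nat_diff)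
  have i1: "i - 1 < n" using assms by auto
  have "fst (xk n m (lam,k)) ! (i-1) = fst (nu_pow (-k) (xmap n m lam)) ! (i-1) + k * int m"
    using nu_pow_props(1)[OF l assms(1)] i1 by (simp add: xk_def Let_def del: upt_Suc)
  also have "fst (nu_pow (-k) (xmap n m lam)) ! (i-1) = fst (xmap n m lam) ! q"
    using nu_pow_props(3)[OF l assms(1) i1] by (simp add: q_def)
  also have "\<dots> = int (m * (n - Suc q) + n * part_at lam (n - q))"
    using qn by (rule xmap_fst_nth)
  also have "\<dots> = int m * (int (rowf n k i) - 1) + int n * int (part_at lam (rowf n k i))"
  proof -
    have "int (n - Suc q) = int n - int (Suc q)" using qn by (intro of_nat_diff) simp
    moreover have "int (rowf n k i) = int n - int q" using r qn by (simp add: of_nat_diff)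
    ultimately have "int (m * (n - Suc q)) = int m * (int (rowf n k i) - 1)"
      by (simp only: of_nat_mult) simp
    then show ?thesis using r by simp
  qed
  finally show ?thesis .
qed

lemma xk_snd:
  assumes "0 < n" "j \<in> {1..m}"
  shows "snd (xk n m (lam,k)) ! (j-1) = int n * (int j - 1) + int m * int (conj_at lam j) + k * int m"
proof -
  note l = xmap_len(1)[of n m lam]
  have j1: "j - 1 < m" using assms by auto
  have "snd (xk n m (lam,k)) ! (j-1) = snd (xmap n m lam) ! (j-1) + k * int m"
    using nu_pow_props(2)[OF l assms(1)] j1 xmap_len(2)[of n m lam] by (simp add: xk_def Let_def del: upt_Suc)
  also have "snd (xmap n m lam) ! (j-1) = int (n * (j - 1) + m * conj_at lam (Suc (j - 1)))"
    using j1 by (rule xmap_snd_nth)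
  finally show ?thesis using assms by (simp add: of_nat_diff algebra_simps)
qed

lemma wt_eq:
  assumes "length (fst X) = n" "length (fst Y) = n" "length (snd X) = m" "length (snd Y) = m"
    "\<And>i. i \<in> {1..n} \<Longrightarrow> fst X ! (i-1) = fst Y ! (i-1)"
    "\<And>j. j \<in> {1..m} \<Longrightarrow> snd X ! (j-1) = snd Y ! (j-1)"
  shows "X = Y"
proof -
  have "fst X = fst Y"
  proof (rule nth_equalityI)
    fix p assume "p < length (fst X)"
    then show "fst X ! p = fst Y ! p" using assms(1) assms(5)[of "Suc p"] by auto
  qed (use assms in auto)
  moreover have "snd X = snd Y"
  proof (rule nth_equalityI)
    fix p assume "p < length (snd X)"
    then show "snd X ! p = snd Y ! p" using assms(3) assms(6)[of "Suc p"] by auto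
  qed (use assms in auto)
  ultimately show ?thesis by (simp add: prod_eq_iff)
qed

lemma rowf_range: "0 < n \<Longrightarrow> rowf n k i \<in> {1..n}"
proof -
  assume n: "0 < n"
  have "nat ((int i + k - 1) mod int n) < n" using n by (simp add: nat_less_iff)
  then show ?thesis by (auto simp: rowf_def)
qed

lemma small_dvd_zero:
  fixes d :: int
  assumes "int n dvd d" "\<bar>d\<bar> < int n"
  shows "d = 0"
proof -
  obtain c where c: "d = int n * c" using assms(1) by (auto elim: dvdE)
  show ?thesis
  proof (rule ccontr)
    assume "d \<noteq> 0"
    then have "c \<noteq> 0" using c by auto
    then have "\<bar>c\<bar> \<ge> 1" by linarith
    then have "\<bar>d\<bar> \<ge> int n" unfolding c abs_mult by (simp add: mult_le_cancel_left1)
    then show False using assms(2) by simp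
  qed
qed

lemma rowf_inj:
  assumes "0 < n" "i \<in> {1..n}" "i' \<in> {1..n}" "rowf n k i = rowf n k i'"
  shows "i = i'"
proof -
  define x where "x = (int i + k - 1) mod int n"
  define y where "y = (int i' + k - 1) mod int n"
  have a: "0 \<le> x" "x < int n" "0 \<le> y" "y < int n" using assms(1) by (auto simp: x_def y_def)
  have "n - nat x = n - nat y" using assms(4) unfolding rowf_def x_def y_def .
  then have "x = y" using a by linarith
  then have "int n dvd ((int i + k - 1) - (int i' + k - 1))"
    unfolding x_def y_def by (simp add: mod_eq_dvd_iff)
  then have "int n dvd (int i - int i')" by simp
  moreover have "\<bar>int i - int i'\<bar> < int n" using assms(2,3) by auto
  ultimately have "int i - int i' = 0" by (rule small_dvd_zero)
  then show ?thesis by simp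
qed

definition idx :: "nat \<Rightarrow> int \<Rightarrow> nat \<Rightarrow> nat" where
  "idx n k r = nat ((int n - int r - k) mod int n) + 1"

lemma idx_props:
  assumes "0 < n" "r \<in> {1..n}"
  shows "idx n k r \<in> {1..n}" "rowf n k (idx n k r) = r"
proof -
  have "nat ((int n - int r - k) mod int n) < n" using assms by (simp add: nat_less_iff)
  then show "idx n k r \<in> {1..n}" by (auto simp: idx_def)
  have "(int (idx n k r) + k - 1) mod int n = ((int n - int r - k) mod int n + k) mod int n"
    using assms by (simp add: idx_def)
  also have "\<dots> = (int n - int r) mod int n" by (simp add: mod_add_left_eq)
  also have "\<dots> = int n - int r" using assms by (intro mod_pos_pos_trivial) auto
  finally have "nat ((int (idx n k r) + k - 1) mod int n) = n - r" by simp
  then show "rowf n k (idx n k r) = r" using assms by (simp add: rowf_def)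
qed

lemma rowf_succ:
  assumes "0 < n"
  shows "rowf n (k+1) i = (if rowf n k i \<ge> 2 then rowf n k i - 1 else n)"
proof -
  define p where "p = (int i + k - 1) mod int n"
  have p: "0 \<le> p" "p < int n" using assms by (auto simp: p_def)
  have "(p + 1) mod int n = (int i + k - 1 + 1) mod int n" unfolding p_def by (rule mod_add_left_eq)
  then have e: "(int i + (k+1) - 1) mod int n = (p + 1) mod int n" by (simp add: algebra_simps)
  show ?thesis
  proof (cases "p + 1 < int n")
    case True
    then have "(int i + (k+1) - 1) mod int n = p + 1" using e p by (simp add: mod_pos_pos_trivial)
    then show ?thesis using True p unfolding rowf_def p_def[symmetric] by auto
  next
    case False
    then have "p + 1 = int n" using p by auto
    then have "(int i + (k+1) - 1) mod int n = 0" using e by simp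
    then show ?thesis using False p \<open>p + 1 = int n\<close> unfolding rowf_def p_def[symmetric] by auto
  qed
qed



lemma partX_D:
  assumes "lam \<in> partX n m"
  shows "length lam = n"
    "\<And>i i'. 1 \<le> i \<Longrightarrow> i \<le> i' \<Longrightarrow> i' \<le> n \<Longrightarrow> part_at lam i' \<le> part_at lam i"
    "\<And>i. i \<in> {1..n} \<Longrightarrow> part_at lam i \<le> m"
proof -
  show l: "length lam = n" using assms by (simp add: partX_def)
  fix i i' assume a: "1 \<le> i" "i \<le> i'" "i' \<le> n"
  show "part_at lam i' \<le> part_at lam i"
  proof (cases "i = i'")
    case False
    then have "i - 1 < i' - 1" "i' - 1 < length lam" using a l by auto
    then show ?thesis using assms unfolding partX_def part_at_def sorted_wrt_iff_nth_less by blast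
  qed simp
next
  fix i assume "i \<in> {1..n}"
  then have "lam ! (i-1) \<in> set lam" using assms by (auto simp: partX_def)
  then show "part_at lam i \<le> m" using assms by (auto simp: partX_def part_at_def)
qed

lemma partX_I:
  assumes "length lam = n"
    "\<And>i i'. 1 \<le> i \<Longrightarrow> i < i' \<Longrightarrow> i' \<le> n \<Longrightarrow> part_at lam i' \<le> part_at lam i"
    "\<And>i. i \<in> {1..n} \<Longrightarrow> part_at lam i \<le> m"
  shows "lam \<in> partX n m"
proof -
  have "sorted_wrt (\<ge>) lam" unfolding sorted_wrt_iff_nth_less
  proof (intro allI impI)
    fix i j assume "i < j" "j < length lam"
    then show "lam ! j \<le> lam ! i" using assms(1) assms(2)[of "Suc i" "Suc j"] by (auto simp: part_at_def)
  qed
  moreover have "\<forall>x\<in>set lam. x \<le> m"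
  proof
    fix x assume "x \<in> set lam"
    then obtain p where "p < n" "x = lam ! p" using assms(1) by (auto simp: in_set_conv_nth)
    then show "x \<le> m" using assms(3)[of "Suc p"] by (auto simp: part_at_def)
  qed
  ultimately show ?thesis using assms(1) by (simp add: partX_def)
qed

lemma conj_eqI:
  assumes "length lam = n" "p \<le> n" "\<And>i. i \<in> {1..n} \<Longrightarrow> (j \<le> part_at lam i \<longleftrightarrow> i \<le> p)"
  shows "conj_at lam j = p"
proof -
  have "{i \<in> {1..length lam}. part_at lam i \<ge> j} = {1..p}" using assms by auto
  then show ?thesis by (simp add: conj_at_def)
qed

lemma conj_iff:
  assumes "lam \<in> partX n m"
  shows "conj_at lam j \<le> n" "\<And>i. i \<in> {1..n} \<Longrightarrow> (j \<le> part_at lam i \<longleftrightarrow> i \<le> conj_at lam j)"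
proof -
  note P = partX_D[OF assms]
  define S where "S = {i \<in> {1..n}. j \<le> part_at lam i}"
  define p where "p = (if S = {} then 0 else Max S)"
  have fin: "finite S" by (simp add: S_def)
  have pn: "p \<le> n"
  proof (cases "S = {}")
    case False
    then have "Max S \<in> S" using fin by simp
    then show ?thesis using False by (auto simp: p_def S_def)
  qed (simp add: p_def)
  have key: "j \<le> part_at lam i \<longleftrightarrow> i \<le> p" if i: "i \<in> {1..n}" for i
  proof
    assume "j \<le> part_at lam i"
    then have "i \<in> S" using i by (simp add: S_def)
    then show "i \<le> p" using fin by (auto simp: p_def)
  next
    assume ip: "i \<le> p"
    then have ne: "S \<noteq> {}" using i by (auto simp: p_def)
    then have "Max S \<in> S" using fin by simp
    then have "j \<le> part_at lam (Max S)" "Max S \<le> n" by (auto simp: S_def)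
    moreover have "part_at lam (Max S) \<le> part_at lam i" using P(2)[of i "Max S"] i ip ne \<open>Max S \<le> n\<close> by (auto simp: p_def)
    ultimately show "j \<le> part_at lam i" by simp
  qed
  have c: "conj_at lam j = p" using conj_eqI[OF P(1) pn key] .
  show "conj_at lam j \<le> n" using c pn by simp
  fix i assume "i \<in> {1..n}" then show "j \<le> part_at lam i \<longleftrightarrow> i \<le> conj_at lam j" using key c by simp
qed

lemma part_at_update:
  assumes "length lam = n" "r \<in> {1..n}" "i \<in> {1..n}"
  shows "part_at (lam[r-1 := v]) i = (if i = r then v else part_at lam i)"
  using assms by (auto simp: part_at_def nth_list_update)

lemma conj_update:
  assumes "length lam = n" "r \<in> {1..n}"
  shows "conj_at (lam[r-1 := Suc (part_at lam r)]) j = conj_at lam j + (if j = Suc (part_at lam r) then 1 else 0)"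
proof -
  define S where "S = {i \<in> {1..n}. part_at lam i \<ge> j}"
  define S' where "S' = {i \<in> {1..n}. part_at (lam[r-1 := Suc (part_at lam r)]) i \<ge> j}"
  have c: "conj_at lam j = card S" "conj_at (lam[r-1 := Suc (part_at lam r)]) j = card S'"
    using assms by (simp_all add: conj_at_def S_def S'_def)
  show ?thesis
  proof (cases "j = Suc (part_at lam r)")
    case True
    then have "S' = insert r S" "r \<notin> S" using assms part_at_update[OF assms(1,2)] by (auto simp: S_def S'_def)
    then show ?thesis using c True by (simp add: S_def)
  next
    case False
    then have "S' = S" using assms part_at_update[OF assms(1,2)] by (auto simp: S_def S'_def split: if_splits)
    then show ?thesis using c False by simp
  qed
qed

lemma pbar_at:
  assumes "length lam = n" "0 < n" "i \<in> {1..n}"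
  shows "part_at (pbar lam) i = (if i < n then part_at lam (i+1) else 0)"
  using assms by (auto simp: pbar_def part_at_def nth_append nth_tl)

lemma pbar_len: "length lam = n \<Longrightarrow> 0 < n \<Longrightarrow> length (pbar lam) = n"
  by (simp add: pbar_def)

lemma pbar_partX:
  assumes "lam \<in> partX n m" "0 < n"
  shows "pbar lam \<in> partX n m"
proof (rule partX_I)
  note P = partX_D[OF assms(1)]
  show "length (pbar lam) = n" using pbar_len[OF P(1) assms(2)] .
  fix i i' assume "1 \<le> i" "i < i'" "i' \<le> n"
  then show "part_at (pbar lam) i' \<le> part_at (pbar lam) i"
    using pbar_at[OF P(1) assms(2)] P(2)[of "i+1" "i'+1"] by auto
next
  note P = partX_D[OF assms(1)]
  fix i assume "i \<in> {1..n}"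
  then show "part_at (pbar lam) i \<le> m" using pbar_at[OF P(1) assms(2)] P(3)[of "i+1"] by auto
qed

lemma conj_pbar:
  assumes "lam \<in> partX n m" "0 < n" "part_at lam 1 = m" "j \<in> {1..m}"
  shows "int (conj_at (pbar lam) j) = int (conj_at lam j) - 1"
proof -
  note P = partX_D[OF assms(1)]
  note C = conj_iff[OF assms(1)]
  have c1: "1 \<le> conj_at lam j" using C(2)[of 1 j] assms by auto
  have "conj_at (pbar lam) j = conj_at lam j - 1"
  proof (rule conj_eqI[OF pbar_len[OF P(1) assms(2)]])
    show "conj_at lam j - 1 \<le> n" using C(1)[of j] by simp
    fix i assume i: "i \<in> {1..n}"
    show "j \<le> part_at (pbar lam) i \<longleftrightarrow> i \<le> conj_at lam j - 1"
    proof (cases "i < n")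
      case True
      then show ?thesis using pbar_at[OF P(1) assms(2) i] C(2)[of "i+1" j] i by auto
    next
      case False
      then show ?thesis using pbar_at[OF P(1) assms(2) i] C(1)[of j] i assms(4) by auto
    qed
  qed
  then show ?thesis using c1 by simp
qed



lemma shift_xk:
  assumes "lam \<in> partX n m" "0 < n" "part_at lam 1 = m"
  shows "xk n m (pbar lam, k + 1) = xk n m (lam, k)"
proof (rule wt_eq[OF xk_len(1)[OF assms(2)] xk_len(1)[OF assms(2)] xk_len(2)[OF assms(2)] xk_len(2)[OF assms(2)]])
  note P = partX_D[OF assms(1)]
  fix i assume i: "i \<in> {1..n}"
  define r where "r = rowf n k i"
  have r: "r \<in> {1..n}" using rowf_range[OF assms(2)] by (simp add: r_def)
  have rs: "rowf n (k+1) i = (if r \<ge> 2 then r - 1 else n)" using rowf_succ[OF assms(2)] by (simp add: r_def)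
  show "fst (xk n m (pbar lam, k + 1)) ! (i - 1) = fst (xk n m (lam, k)) ! (i - 1)"
  proof (cases "r \<ge> 2")
    case True
    have rr: "r - 1 \<in> {1..n}" "r - 1 < n" "r - 1 + 1 = r" using True r by auto
    have "part_at (pbar lam) (r - 1) = part_at lam r" using pbar_at[OF P(1) assms(2) rr(1)] rr(2,3) by simp
    have "int (r - 1) = int r - 1" using True by (simp add: of_nat_diff)
    then show ?thesis unfolding xk_fst[OF assms(2) i] using rs True \<open>part_at (pbar lam) (r - 1) = part_at lam r\<close>
      unfolding r_def[symmetric] by (simp add: algebra_simps)
  next
    case False
    then have r1: "r = 1" using r by auto
    have "part_at (pbar lam) n = 0" using pbar_at[OF P(1) assms(2), of n] assms(2) by auto
    then show ?thesis unfolding xk_fst[OF assms(2) i] using rs False r1 assms(3) unfolding r_def[symmetric]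
      by (simp add: algebra_simps)
  qed
next
  fix j assume j: "j \<in> {1..m}"
  show "snd (xk n m (pbar lam, k + 1)) ! (j - 1) = snd (xk n m (lam, k)) ! (j - 1)"
  proof -
    have "int m * int (conj_at (pbar lam) j) = int m * (int (conj_at lam j) - 1)" using conj_pbar[OF assms j] by simp
    then show ?thesis unfolding xk_snd[OF assms(2) j] by (simp add: algebra_simps)
  qed
qed

lemma tau_pos_xk:
  assumes "length lam = n" "0 < n" "i \<in> {1..n}" "j \<in> {1..m}" "part_at lam (rowf n k i) + 1 = j"
  shows "tau_pos n m i j (xk n m (lam,k)) = xk n m (lam[rowf n k i - 1 := j], k)"
proof -
  define r where "r = rowf n k i"
  have r: "r \<in> {1..n}" using rowf_range[OF assms(2)] by (simp add: r_def)
  have lu: "lam[r - 1 := j] = lam[r-1 := Suc (part_at lam r)]" using assms(5) by (simp add: r_def)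
  have ln: "length (lam[r-1 := j]) = n" using assms(1) by simp
  show ?thesis unfolding r_def[symmetric]
  proof (rule wt_eq)
    show "length (fst (tau_pos n m i j (xk n m (lam, k)))) = n" using xk_len[OF assms(2)] by (simp add: tau_pos_def)
    show "length (snd (tau_pos n m i j (xk n m (lam, k)))) = m" using xk_len[OF assms(2)] by (simp add: tau_pos_def)
    show "length (fst (xk n m (lam[r - 1 := j], k))) = n" using xk_len[OF assms(2)] by simp
    show "length (snd (xk n m (lam[r - 1 := j], k))) = m" using xk_len[OF assms(2)] by simp
  next
    fix i' assume i': "i' \<in> {1..n}"
    have r': "rowf n k i' \<in> {1..n}" using rowf_range[OF assms(2)] by simp
    have il: "i' - 1 < length (fst (xk n m (lam, k)))" "i - 1 < length (fst (xk n m (lam, k)))"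
      using i' assms(3) xk_len[OF assms(2)] by auto
    show "fst (tau_pos n m i j (xk n m (lam, k))) ! (i' - 1) = fst (xk n m (lam[r - 1 := j], k)) ! (i' - 1)"
    proof (cases "i' = i")
      case True
      have "fst (tau_pos n m i j (xk n m (lam, k))) ! (i' - 1) = fst (xk n m (lam,k)) ! (i-1) + int n"
        using il True by (simp add: tau_pos_def)
      also have "\<dots> = fst (xk n m (lam[r - 1 := j], k)) ! (i' - 1)"
      proof -
        have hj: "int j = int (part_at lam (rowf n k i)) + 1" using assms(5) by simp
        show ?thesis
          unfolding True xk_fst[OF assms(2) assms(3)] using part_at_update[OF assms(1) r r, of j] hj
          by (simp add: r_def algebra_simps)
      qed
      finally show ?thesis .
    next
      case False
      then have "rowf n k i' \<noteq> r" using rowf_inj[OF assms(2) i' assms(3)] by (auto simp: r_def)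
      have "i - 1 \<noteq> i' - 1" using False i' assms(3) by auto
      then show ?thesis using xk_fst[OF assms(2) i', of m lam k] xk_fst[OF assms(2) i', of m "lam[r - 1 := j]" k]
          il i' assms(3) part_at_update[OF assms(1) r r', of j] False \<open>i - 1 \<noteq> i' - 1\<close> \<open>rowf n k i' \<noteq> r\<close>
        by (simp add: tau_pos_def)
    qed
  next
    fix j' assume j': "j' \<in> {1..m}"
    have jm: "j - 1 < length (snd (xk n m (lam, k)))" "j' - 1 < length (snd (xk n m (lam, k)))"
      using assms(4) j' xk_len[OF assms(2)] by auto
    have c: "conj_at (lam[r-1 := j]) j' = conj_at lam j' + (if j' = j then 1 else 0)"
      unfolding lu using conj_update[OF assms(1) r, of j'] assms(5) by (simp add: r_def)
    show "snd (tau_pos n m i j (xk n m (lam, k))) ! (j' - 1) = snd (xk n m (lam[r - 1 := j], k)) ! (j' - 1)"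
    proof (cases "j' = j")
      case True
      then show ?thesis using xk_snd[OF assms(2) j', of lam k] xk_snd[OF assms(2) j', of "lam[r - 1 := j]" k]
          xk_len[OF assms(2)] c jm by (simp add: tau_pos_def algebra_simps)
    next
      case False
      then have "j' - 1 \<noteq> j - 1" using j' assms(4) by auto
      then show ?thesis using xk_snd[OF assms(2) j', of lam k] xk_snd[OF assms(2) j', of "lam[r - 1 := j]" k]
          xk_len[OF assms(2)] c jm False by (simp add: tau_pos_def)
    qed
  qed
qed

lemma tau_neg_pos:
  assumes "length (fst L) = n" "length (snd L) = m" "i \<in> {1..n}" "j \<in> {1..m}"
  shows "tau_neg n m i j (tau_pos n m i j L) = L"
proof -
  have "i - 1 < length (fst L)" "j - 1 < length (snd L)" using assms by auto
  then show ?thesis by (simp add: tau_neg_def tau_pos_def prod_eq_iff)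
qed

lemma tau_neg_xk:
  assumes "length lam = n" "0 < n" "i \<in> {1..n}" "j \<in> {1..m}" "part_at lam (rowf n k i) = j"
  shows "tau_neg n m i j (xk n m (lam,k)) = xk n m (lam[rowf n k i - 1 := j - 1], k)"
proof -
  define r where "r = rowf n k i"
  have r: "r \<in> {1..n}" using rowf_range[OF assms(2)] by (simp add: r_def)
  define lam' where "lam' = lam[r - 1 := j - 1]"
  have l': "length lam' = n" using assms(1) by (simp add: lam'_def)
  have "part_at lam' r = j - 1" using part_at_update[OF assms(1) r r] by (simp add: lam'_def)
  then have "part_at lam' (rowf n k i) + 1 = j" using assms(4) by (simp add: r_def)
  from tau_pos_xk[OF l' assms(2-4) this]
  have "tau_pos n m i j (xk n m (lam',k)) = xk n m (lam'[r - 1 := j], k)" by (simp add: r_def)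
  also have "lam'[r - 1 := j] = lam"
  proof -
    have "lam ! (r - 1) = j" using assms(5) by (simp add: r_def part_at_def)
    then show ?thesis by (metis lam'_def list_update_id list_update_overwrite)
  qed
  finally have "tau_neg n m i j (xk n m (lam,k)) = tau_neg n m i j (tau_pos n m i j (xk n m (lam',k)))" by simp
  also have "\<dots> = xk n m (lam',k)" using tau_neg_pos[OF xk_len[OF assms(2)] assms(3,4)] .
  finally show ?thesis by (simp add: lam'_def r_def)
qed

lemma Pi_pos_xk:
  assumes "0 < n" "i \<in> {1..n}" "j \<in> {1..m}"
  shows "Pi_pos i j (xk n m (lam,k)) \<longleftrightarrow>
    int m * (int (rowf n k i) - 1) + int n * int (part_at lam (rowf n k i)) = int n * (int j - 1) + int m * int (conj_at lam j)"
  using xk_fst[OF assms(1,2)] xk_snd[OF assms(1,3)] by (simp add: Pi_pos_def)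

lemma Pi_neg_xk:
  assumes "0 < n" "i \<in> {1..n}" "j \<in> {1..m}"
  shows "Pi_neg n m i j (xk n m (lam,k)) \<longleftrightarrow>
    int m * (int (rowf n k i) - 1) + int n * int (part_at lam (rowf n k i)) - (int n * (int j - 1) + int m * int (conj_at lam j)) = int n - int m"
  using xk_fst[OF assms(1,2)] xk_snd[OF assms(1,3)] by (simp add: Pi_neg_def)

lemma dvd_range:
  fixes d :: int
  assumes "0 < n" "int n dvd d" "- int n \<le> d" "d < int n"
  shows "d = 0 \<or> d = - int n"
proof (rule ccontr)
  assume h: "\<not> (d = 0 \<or> d = - int n)"
  then have "\<bar>d\<bar> < int n" using assms by auto
  then show False using small_dvd_zero[OF assms(2)] h by auto
qed

lemma coprime_cancel:
  fixes x y :: int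
  assumes "coprime m n" "int m * x = int n * y"
  shows "int n dvd x"
proof -
  have "coprime (int n) (int m)" using assms(1) by (simp add: coprime_commute)
  moreover have "int n dvd int m * x" using assms(2) by simp
  ultimately show ?thesis by (simp add: coprime_dvd_mult_right_iff)
qed



lemma pos_cases:
  assumes "lam \<in> partX n m" "0 < n" "coprime m n" "r \<in> {1..n}" "j \<in> {1..m}"
    "int m * (int r - 1) + int n * int (part_at lam r) = int n * (int j - 1) + int m * int (conj_at lam j)"
  shows "(part_at lam r + 1 = j \<and> conj_at lam j + 1 = r) \<or> (r = 1 \<and> part_at lam 1 = m \<and> j = 1 \<and> conj_at lam j = n)"
proof -
  note P = partX_D[OF assms(1)] and C = conj_iff[OF assms(1)]
  define d where "d = int r - 1 - int (conj_at lam j)"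
  define e where "e = int j - 1 - int (part_at lam r)"
  have me: "int m * d = int n * e" using assms(6) by (simp add: d_def e_def algebra_simps)
  have "int n dvd d" using coprime_cancel[OF assms(3) me] .
  moreover have "- int n \<le> d" "d < int n" using C(1)[of j] assms(4) by (auto simp: d_def)
  ultimately have "d = 0 \<or> d = - int n" using dvd_range[OF assms(2)] by blast
  then show ?thesis
  proof
    assume "d = 0"
    then have "e = 0" using me assms(2) by simp
    then show ?thesis using \<open>d = 0\<close> assms(4,5) by (auto simp: d_def e_def)
  next
    assume dn: "d = - int n"
    then have "int n * e = int n * (- int m)" using me by (simp add: algebra_simps)
    moreover have "int n \<noteq> 0" using assms(2) by simp
    ultimately have "e = - int m" using mult_left_cancel by blast
    moreover have "part_at lam r \<le> m" using P(3) assms(4) by simp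
    ultimately have "j = 1" "part_at lam r = m" using assms(5) by (auto simp: e_def)
    moreover have "r = 1" "conj_at lam j = n" using dn C(1)[of j] assms(4) by (auto simp: d_def)
    ultimately show ?thesis by simp
  qed
qed

lemma neg_cases:
  assumes "lam \<in> partX n m" "0 < n" "coprime m n" "r \<in> {1..n}" "j \<in> {1..m}"
    "int m * (int r - 1) + int n * int (part_at lam r) - (int n * (int j - 1) + int m * int (conj_at lam j)) = int n - int m"
  shows "(part_at lam r = j \<and> conj_at lam j = r) \<or> (r = n \<and> conj_at lam j = 0 \<and> j = m \<and> part_at lam r = 0)"
proof -
  note P = partX_D[OF assms(1)] and C = conj_iff[OF assms(1)]
  define d where "d = int (conj_at lam j) - int r"
  define e where "e = int (part_at lam r) - int j"
  have me: "int m * d = int n * e" using assms(6) by (simp add: d_def e_def algebra_simps)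
  have "int n dvd d" using coprime_cancel[OF assms(3) me] .
  moreover have "- int n \<le> d" "d < int n" using C(1)[of j] assms(4) by (auto simp: d_def)
  ultimately have "d = 0 \<or> d = - int n" using dvd_range[OF assms(2)] by blast
  then show ?thesis
  proof
    assume "d = 0"
    then have "e = 0" using me assms(2) by simp
    then show ?thesis using \<open>d = 0\<close> assms(4,5) by (auto simp: d_def e_def)
  next
    assume dn: "d = - int n"
    then have "int n * e = int n * (- int m)" using me by (simp add: algebra_simps)
    moreover have "int n \<noteq> 0" using assms(2) by simp
    ultimately have "e = - int m" using mult_left_cancel by blast
    then have "j = m" "part_at lam r = 0" using assms(5) by (auto simp: e_def)
    moreover have "r = n" "conj_at lam j = 0" using dn C(1)[of j] assms(4) by (auto simp: d_def)
    ultimately show ?thesis by simp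
  qed
qed

lemma upd_partX:
  assumes "lam \<in> partX n m" "r \<in> {1..n}" "v \<le> m"
    "\<And>a. 1 \<le> a \<Longrightarrow> a < r \<Longrightarrow> v \<le> part_at lam a"
    "\<And>b. r < b \<Longrightarrow> b \<le> n \<Longrightarrow> part_at lam b \<le> v"
  shows "lam[r-1 := v] \<in> partX n m"
proof (rule partX_I)
  note P = partX_D[OF assms(1)]
  show "length (lam[r - 1 := v]) = n" using P(1) by simp
  fix a b assume ab: "1 \<le> a" "a < b" "b \<le> n"
  then show "part_at (lam[r - 1 := v]) b \<le> part_at (lam[r - 1 := v]) a"
    using part_at_update[OF P(1) assms(2), of a v] part_at_update[OF P(1) assms(2), of b v]
      assms(4)[of a] assms(5)[of b] P(2)[of a b] by auto
next
  note P = partX_D[OF assms(1)]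
  fix a assume "a \<in> {1..n}"
  then show "part_at (lam[r - 1 := v]) a \<le> m"
    using part_at_update[OF P(1) assms(2), of a v] P(3)[of a] assms(3) by auto
qed

lemma cons_butlast:
  assumes "lam \<in> partX n m" "0 < n" "part_at lam n = 0"
  shows "m # butlast lam \<in> partX n m" "pbar (m # butlast lam) = lam" "part_at (m # butlast lam) 1 = m"
    "\<And>i. i \<in> {2..n} \<Longrightarrow> part_at (m # butlast lam) i = part_at lam (i - 1)"
proof -
  note P = partX_D[OF assms(1)]
  have ne: "lam \<noteq> []" using P(1) assms(2) by auto
  show pa: "\<And>i. i \<in> {2..n} \<Longrightarrow> part_at (m # butlast lam) i = part_at lam (i - 1)"
  proof -
    fix i assume "i \<in> {2..n}"
    then show "part_at (m # butlast lam) i = part_at lam (i - 1)"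
      using P(1) by (cases i) (auto simp: part_at_def nth_butlast)
  qed
  show p1: "part_at (m # butlast lam) 1 = m" by (simp add: part_at_def)
  show "m # butlast lam \<in> partX n m"
  proof (rule partX_I)
    show "length (m # butlast lam) = n" using P(1) assms(2) by simp
    fix a b assume ab: "1 \<le> a" "a < b" "b \<le> n"
    show "part_at (m # butlast lam) b \<le> part_at (m # butlast lam) a"
    proof (cases "a = 1")
      case True
      have "b - 1 \<in> {1..n}" "b \<in> {2..n}" using ab True by auto
      then show ?thesis using pa[of b] p1 P(3)[of "b-1"] True by auto
    next
      case False
      then show ?thesis using pa[of b] pa[of a] P(2)[of "a-1" "b-1"] ab by auto
    qed
  next
    fix a assume "a \<in> {1..n}"
    then show "part_at (m # butlast lam) a \<le> m"
    proof (cases "a = 1")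
      case False
      then have "a - 1 \<in> {1..n}" "a \<in> {2..n}" using \<open>a \<in> {1..n}\<close> by auto
      then show ?thesis using pa[of a] P(3)[of "a-1"] by auto
    qed (use p1 in simp)
  qed
  have "last lam = 0" using assms(3) ne P(1) by (simp add: last_conv_nth part_at_def)
  then show "pbar (m # butlast lam) = lam" using ne by (simp add: pbar_def) (metis append_butlast_last_id)
qed

lemma xk0: "xk n m (lam, 0) = xmap n m lam"
proof -
  have "map (\<lambda>a. a) xs = xs" for xs :: "int list" by simp
  then show ?thesis by (simp add: xk_def nu_pow_def prod_eq_iff)
qed

lemma zero_partX: "replicate n 0 \<in> partX n m"
  by (simp add: partX_def sorted_wrt_iff_nth_less)

lemma orbit_sub_image:
  assumes "L \<in> orbit n m" "0 < n" "n < m" "coprime m n"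
  shows "\<exists>lam\<in>partX n m. \<exists>k. L = xk n m (lam, k)"
  using assms(1)
proof (induction rule: orbit.induct)
  case base
  show ?case using zero_partX xk0 by (metis Lambda0_def)
next
  case (pos L i j)
  then obtain lam k where lam: "lam \<in> partX n m" and L: "L = xk n m (lam, k)" by blast
  note P = partX_D[OF lam] and C = conj_iff[OF lam]
  define r where "r = rowf n k i"
  have r: "r \<in> {1..n}" using rowf_range[OF assms(2)] by (simp add: r_def)
  have eq: "int m * (int r - 1) + int n * int (part_at lam r) = int n * (int j - 1) + int m * int (conj_at lam j)"
    using pos.hyps(4) Pi_pos_xk[OF assms(2) pos.hyps(2,3)] by (simp add: L r_def)
  from pos_cases[OF lam assms(2,4) r pos.hyps(3) eq]
  show ?case
  proof
    assume A: "part_at lam r + 1 = j \<and> conj_at lam j + 1 = r"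
    have T: "tau_pos n m i j L = xk n m (lam[r - 1 := j], k)"
      using tau_pos_xk[OF P(1) assms(2) pos.hyps(2,3)] A by (simp add: L r_def)
    have "lam[r - 1 := j] \<in> partX n m"
    proof (rule upd_partX[OF lam r])
      show "j \<le> m" using pos.hyps(3) by simp
      fix a assume "1 \<le> a" "a < r"
      then show "j \<le> part_at lam a" using C(2)[of a j] A r by auto
    next
      fix b assume "r < b" "b \<le> n"
      then show "part_at lam b \<le> j" using P(2)[of r b] A r by auto
    qed
    then show ?thesis using T by blast
  next
    assume B: "r = 1 \<and> part_at lam 1 = m \<and> j = 1 \<and> conj_at lam j = n"
    have L2: "L = xk n m (pbar lam, k + 1)" using shift_xk[OF lam assms(2)] B L by simp
    have r2: "rowf n (k+1) i = n" using rowf_succ[OF assms(2), of k i] B by (simp add: r_def)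
    have pl: "pbar lam \<in> partX n m" using pbar_partX[OF lam assms(2)] .
    have z: "part_at (pbar lam) n = 0" using pbar_at[OF P(1) assms(2), of n] assms(2) by simp
    have T: "tau_pos n m i j L = xk n m ((pbar lam)[n - 1 := 1], k + 1)"
      using tau_pos_xk[OF partX_D(1)[OF pl] assms(2) pos.hyps(2,3), of "k+1"] B r2 z L2 by simp
    have "(pbar lam)[n - 1 := 1] \<in> partX n m"
    proof (rule upd_partX[OF pl])
      show "n \<in> {1..n}" "1 \<le> m" using assms by auto
      fix a assume a: "1 \<le> a" "a < n"
      then show "1 \<le> part_at (pbar lam) a" using pbar_at[OF P(1) assms(2), of a] C(2)[of "a+1" 1] B by auto
    next
      fix b :: nat assume "n < b" "b \<le> n" then show "part_at (pbar lam) b \<le> 1" by simp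
    qed
    then show ?thesis using T by blast
  qed
next
  case (neg L i j)
  then obtain lam k where lam: "lam \<in> partX n m" and L: "L = xk n m (lam, k)" by blast
  note P = partX_D[OF lam] and C = conj_iff[OF lam]
  define r where "r = rowf n k i"
  have r: "r \<in> {1..n}" using rowf_range[OF assms(2)] by (simp add: r_def)
  have eq: "int m * (int r - 1) + int n * int (part_at lam r) - (int n * (int j - 1) + int m * int (conj_at lam j)) = int n - int m"
    using neg.hyps(4) Pi_neg_xk[OF assms(2) neg.hyps(2,3)] by (simp add: L r_def)
  from neg_cases[OF lam assms(2,4) r neg.hyps(3) eq]
  show ?case
  proof
    assume A: "part_at lam r = j \<and> conj_at lam j = r"
    have T: "tau_neg n m i j L = xk n m (lam[r - 1 := j - 1], k)"
      using tau_neg_xk[OF P(1) assms(2) neg.hyps(2,3)] A by (simp add: L r_def)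
    have "lam[r - 1 := j - 1] \<in> partX n m"
    proof (rule upd_partX[OF lam r])
      show "j - 1 \<le> m" using neg.hyps(3) by auto
      fix a assume "1 \<le> a" "a < r"
      then show "j - 1 \<le> part_at lam a" using P(2)[of a r] A r by auto
    next
      fix b assume "r < b" "b \<le> n"
      then show "part_at lam b \<le> j - 1" using C(2)[of b j] A r by auto
    qed
    then show ?thesis using T by blast
  next
    assume B: "r = n \<and> conj_at lam j = 0 \<and> j = m \<and> part_at lam r = 0"
    define mu where "mu = m # butlast lam"
    have z: "part_at lam n = 0" using B by metis
    note M = cons_butlast[OF lam assms(2) z, folded mu_def]
    have L2: "L = xk n m (mu, k - 1)" using shift_xk[OF M(1) assms(2) M(3), of "k-1"] M(2) L by simp
    have r1: "rowf n (k - 1) i = 1"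
    proof -
      have "rowf n (k - 1 + 1) i = (if rowf n (k-1) i \<ge> 2 then rowf n (k-1) i - 1 else n)"
        using rowf_succ[OF assms(2)] by blast
      then have "(if rowf n (k-1) i \<ge> 2 then rowf n (k-1) i - 1 else n) = n" using B by (simp add: r_def)
      then show ?thesis using rowf_range[OF assms(2), of "k-1" i] by (auto split: if_splits)
    qed
    have T: "tau_neg n m i j L = xk n m (mu[0 := m - 1], k - 1)"
      using tau_neg_xk[OF partX_D(1)[OF M(1)] assms(2) neg.hyps(2,3), of "k-1"] B r1 M(3) L2 by simp
    have "mu[1 - 1 := m - 1] \<in> partX n m"
    proof (rule upd_partX[OF M(1)])
      show "1 \<in> {1..n}" "m - 1 \<le> m" using assms by auto
      fix a :: nat assume "1 \<le> a" "a < 1" then show "m - 1 \<le> part_at mu a" by simp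
    next
      fix b assume b: "1 < b" "b \<le> n"
      then have "b - 1 \<in> {1..n}" "b \<in> {2..n}" by auto
      then show "part_at mu b \<le> m - 1" using M(4)[of b] C(2)[of "b-1" m] B by auto
    qed
    then show ?thesis using T by auto
  qed
qed



lemma level:
  assumes "0 < n" "n < m"
  shows "lam \<in> partX n m \<Longrightarrow> (xk n m (lam,k) \<in> orbit n m \<longleftrightarrow> xk n m (replicate n 0, k) \<in> orbit n m)"
proof (induction "sum_list lam" arbitrary: lam rule: less_induct)
  case less
  note lam = less.prems
  note P = partX_D[OF lam] and C = conj_iff[OF lam]
  show ?case
  proof (cases "lam = replicate n 0")
    case True then show ?thesis by simp
  next
    case False
    have "\<not> (\<forall>y\<in>set lam. y = 0)"
    proof
      assume "\<forall>y\<in>set lam. y = 0"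
      then have "lam = replicate n 0" using replicate_length_same[of lam 0] P(1) by simp
      then show False using False by simp
    qed
    then obtain x where x: "x \<in> set lam" "x \<noteq> 0" by auto
    then obtain p where p: "p < n" "lam ! p = x" using P(1) by (auto simp: in_set_conv_nth)
    have "1 \<le> part_at lam (p+1)" using p x by (simp add: part_at_def)
    moreover have "part_at lam (p+1) \<le> part_at lam 1" using P(2)[of 1 "p+1"] p by simp
    ultimately have "1 \<le> part_at lam 1" by simp
    define r where "r = conj_at lam 1"
    have r: "r \<in> {1..n}" using C(2)[of 1 1] C(1)[of 1] \<open>1 \<le> part_at lam 1\<close> assms(1) by (auto simp: r_def)
    define c where "c = part_at lam r"
    have c1: "1 \<le> c" using C(2)[OF r, of 1] by (simp add: c_def r_def)
    have cm: "c \<le> m" using P(3)[OF r] by (simp add: c_def)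
    have zero: "part_at lam b = 0" if "r < b" "b \<le> n" for b
      using C(2)[of b 1] that by (auto simp: r_def)
    define mu where "mu = lam[r - 1 := c - 1]"
    have mu: "mu \<in> partX n m" unfolding mu_def
    proof (rule upd_partX[OF lam r])
      show "c - 1 \<le> m" using cm by simp
      fix a assume "1 \<le> a" "a < r" then show "c - 1 \<le> part_at lam a" using P(2)[of a r] r by (simp add: c_def)
    next
      fix b assume "r < b" "b \<le> n" then show "part_at lam b \<le> c - 1" using zero by simp
    qed
    have rl: "r - 1 < length lam" "lam ! (r - 1) = c" using r P(1) by (auto simp: c_def part_at_def)
    have "sum_list mu < sum_list lam"
    proof -
      have "sum_list mu = sum_list lam + (c - 1) - c" using sum_list_update[OF rl(1)] rl(2) by (simp add: mu_def)
      moreover have "c \<le> sum_list lam" using elem_le_sum_list[OF rl(1)] rl(2) by simp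
      ultimately show ?thesis using c1 by simp
    qed
    then have IH: "xk n m (mu,k) \<in> orbit n m \<longleftrightarrow> xk n m (replicate n 0, k) \<in> orbit n m"
      using less.hyps mu by blast
    define i where "i = idx n k r"
    have i: "i \<in> {1..n}" "rowf n k i = r" using idx_props[OF assms(1) r] by (auto simp: i_def)
    have cj: "c \<in> {1..m}" using c1 cm by simp
    have lm: "length mu = n" using partX_D(1)[OF mu] .
    have pmu: "part_at mu r = c - 1" using part_at_update[OF P(1) r r] by (simp add: mu_def)
    have cmu: "conj_at mu c = r - 1"
    proof (rule conj_eqI[OF lm])
      show "r - 1 \<le> n" using r by auto
      fix i' assume i': "i' \<in> {1..n}"
      show "c \<le> part_at mu i' \<longleftrightarrow> i' \<le> r - 1"
        using part_at_update[OF P(1) r i', of "c-1"] P(2)[of i' r] zero[of i'] c1 r i'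
        by (cases "i' < r"; cases "i' = r") (auto simp: mu_def c_def)
    qed
    have clam: "conj_at lam c = r"
    proof (rule conj_eqI[OF P(1)])
      show "r \<le> n" using r by simp
      fix i' assume i': "i' \<in> {1..n}"
      show "c \<le> part_at lam i' \<longleftrightarrow> i' \<le> r"
        using P(2)[of i' r] zero[of i'] c1 r i' by (cases "i' \<le> r") (auto simp: c_def)
    qed
    have ppos: "Pi_pos i c (xk n m (mu,k))"
      unfolding Pi_pos_xk[OF assms(1) i(1) cj] i(2) pmu cmu using c1 r by (simp add: of_nat_diff)
    have tp: "tau_pos n m i c (xk n m (mu,k)) = xk n m (lam, k)"
    proof -
      have "tau_pos n m i c (xk n m (mu,k)) = xk n m (mu[r - 1 := c], k)"
        using tau_pos_xk[OF lm assms(1) i(1) cj] i(2) pmu c1 by simp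
      also have "mu[r - 1 := c] = lam" using rl by (metis mu_def list_update_id list_update_overwrite)
      finally show ?thesis .
    qed
    have pneg: "Pi_neg n m i c (xk n m (lam,k))"
      unfolding Pi_neg_xk[OF assms(1) i(1) cj] i(2) clam c_def[symmetric] using c1 r
      by (simp add: algebra_simps)
    have tn: "tau_neg n m i c (xk n m (lam,k)) = xk n m (mu, k)"
      using tau_neg_xk[OF P(1) assms(1) i(1) cj] i(2) by (simp add: mu_def c_def)
    have "xk n m (mu,k) \<in> orbit n m \<longleftrightarrow> xk n m (lam,k) \<in> orbit n m"
    proof
      assume "xk n m (mu,k) \<in> orbit n m"
      from orbit.pos[OF this i(1) cj ppos] show "xk n m (lam,k) \<in> orbit n m" using tp by simp
    next
      assume "xk n m (lam,k) \<in> orbit n m"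
      from orbit.neg[OF this i(1) cj pneg] show "xk n m (mu,k) \<in> orbit n m" using tn by simp
    qed
    then show ?thesis using IH by simp
  qed
qed

lemma all_levels:
  assumes "0 < n" "n < m"
  shows "xk n m (replicate n 0, k) \<in> orbit n m"
proof (induction k rule: int_induct[where k = 0])
  case base
  show ?case using orbit.base[of n m] xk0[of n m "replicate n 0"] by (simp add: Lambda0_def)
next
  case (step1 k)
  define lam where "lam = m # replicate (n - 1) 0"
  have lam: "lam \<in> partX n m" using assms by (simp add: lam_def partX_def sorted_wrt_iff_nth_less)
  have "xk n m (lam, k) \<in> orbit n m" using level[OF assms lam] step1 by simp
  moreover have "pbar lam = replicate n 0" using assms
    by (simp add: lam_def pbar_def) (metis Suc_pred replicate_Suc replicate_append_same)
  moreover have "part_at lam 1 = m" by (simp add: lam_def part_at_def)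
  ultimately show ?case using shift_xk[OF lam assms(1)] by metis
next
  case (step2 k)
  define lam where "lam = replicate n m"
  have lam: "lam \<in> partX n m" by (simp add: lam_def partX_def sorted_wrt_iff_nth_less)
  have p1: "part_at lam 1 = m" using assms by (simp add: lam_def part_at_def)
  have "xk n m (pbar lam, k) \<in> orbit n m" using level[OF assms pbar_partX[OF lam assms(1)]] step2 by simp
  then have "xk n m (lam, k - 1) \<in> orbit n m" using shift_xk[OF lam assms(1) p1, of "k-1"] by simp
  then show ?case using level[OF assms lam] by simp
qed

lemma image_sub_orbit:
  assumes "0 < n" "n < m" "lam \<in> partX n m"
  shows "xk n m (lam, k) \<in> orbit n m"
  using level[OF assms(1,2) assms(3)] all_levels[OF assms(1,2)] by simp

lemma inj_aux:
  assumes "0 < n" "n < m"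
  shows "\<forall>lam mu k l. lam \<in> partX n m \<and> mu \<in> partX n m \<and> l = k + int d \<and> xk n m (lam,k) = xk n m (mu,l)
     \<longrightarrow> simX n m (lam,k) (mu,l)"
proof (induction d)
  case 0
  show ?case
  proof (intro allI impI)
    fix lam mu k l assume h: "lam \<in> partX n m \<and> mu \<in> partX n m \<and> l = k + int 0 \<and> xk n m (lam,k) = xk n m (mu,l)"
    have "lam = mu"
    proof (rule nth_equalityI)
      show "length lam = length mu" using h partX_D(1) by metis
      fix p assume "p < length lam"
      then have r: "Suc p \<in> {1..n}" using h partX_D(1) by auto
      define i where "i = idx n k (Suc p)"
      have i: "i \<in> {1..n}" "rowf n k i = Suc p" using idx_props[OF assms(1) r] by (auto simp: i_def)
      have "fst (xk n m (lam,k)) ! (i-1) = fst (xk n m (mu,k)) ! (i-1)" using h by simp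
      then have "int n * int (part_at lam (Suc p)) = int n * int (part_at mu (Suc p))"
        unfolding xk_fst[OF assms(1) i(1)] i(2) by simp
      then show "lam ! p = mu ! p" using assms(1) by (simp add: part_at_def)
    qed
    then show "simX n m (lam,k) (mu,l)" using h by (simp add: simX_def)
  qed
next
  case (Suc d)
  show ?case
  proof (intro allI impI)
    fix lam mu k l assume h: "lam \<in> partX n m \<and> mu \<in> partX n m \<and> l = k + int (Suc d) \<and> xk n m (lam,k) = xk n m (mu,l)"
    then have lam: "lam \<in> partX n m" and mu: "mu \<in> partX n m" and l: "l = k + int (Suc d)"
      and e: "xk n m (lam,k) = xk n m (mu,l)" by auto
    have mj: "m \<in> {1..m}" using assms by simp
    have "snd (xk n m (lam,k)) ! (m-1) = snd (xk n m (mu,l)) ! (m-1)" using e by simp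
    then have "int m * int (conj_at lam m) = int m * (int (conj_at mu m) + int (Suc d))"
      unfolding xk_snd[OF assms(1) mj] l by (simp add: algebra_simps)
    then have "int (conj_at lam m) = int (conj_at mu m) + int (Suc d)" using assms by simp
    then have "1 \<le> conj_at lam m" by simp
    then have "m \<le> part_at lam 1" using conj_iff(2)[OF lam, of 1 m] assms by simp
    then have p1: "part_at lam 1 = m" using partX_D(3)[OF lam, of 1] assms by simp
    have g: "gen_rel n m (lam,k) (pbar lam, k+1)" using lam p1 by (simp add: gen_rel_def)
    have "xk n m (pbar lam, k+1) = xk n m (mu, l)" using shift_xk[OF lam assms(1) p1] e by simp
    moreover have "l = (k + 1) + int d" using l by simp
    ultimately have "simX n m (pbar lam, k+1) (mu,l)"
      using Suc.IH[rule_format, of "pbar lam" mu l "k+1"] pbar_partX[OF lam assms(1)] mu by blast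
    moreover have "simX n m (lam,k) (pbar lam, k+1)" using g by (simp add: simX_def r_into_equivclp)
    ultimately show "simX n m (lam,k) (mu,l)" unfolding simX_def by (rule equivclp_trans[rotated])
  qed
qed

theorem theorem4p14:
  fixes n m :: nat
  assumes "0 < n" and "n < m" and "coprime m n"
  shows "(\<forall>lam\<in>partX n m. \<forall>k::int. part_at lam 1 = m \<longrightarrow>
            xk n m (pbar lam, k + 1) = xk n m (lam, k))
       \<and> (\<forall>p\<in>partX n m \<times> UNIV. \<forall>q\<in>partX n m \<times> UNIV. xk n m p = xk n m q \<longrightarrow> simX n m p q)
       \<and> xk n m ` (partX n m \<times> UNIV) = orbit n m"
proof (intro conjI)
  show "\<forall>lam\<in>partX n m. \<forall>k::int. part_at lam 1 = m \<longrightarrow> xk n m (pbar lam, k + 1) = xk n m (lam, k)"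
    using shift_xk[OF _ assms(1)] by blast
  show "\<forall>p\<in>partX n m \<times> UNIV. \<forall>q\<in>partX n m \<times> UNIV. xk n m p = xk n m q \<longrightarrow> simX n m p q"
  proof (intro ballI impI)
    fix p q assume p: "p \<in> partX n m \<times> UNIV" and q: "q \<in> partX n m \<times> UNIV" and e: "xk n m p = xk n m q"
    obtain lam k where pk: "p = (lam,k)" by (cases p)
    obtain mu l where ql: "q = (mu,l)" by (cases q)
    have lam: "lam \<in> partX n m" and mu: "mu \<in> partX n m" using p q pk ql by auto
    show "simX n m p q"
    proof (cases "k \<le> l")
      case True
      then have "l = k + int (nat (l - k))" by simp
      then show ?thesis using inj_aux[OF assms(1,2), of "nat (l - k)"] lam mu e pk ql by blast
    next
      case False
      then have "k = l + int (nat (k - l))" by simp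
      then have "simX n m q p" using inj_aux[OF assms(1,2), of "nat (k - l)"] lam mu e pk ql by metis
      then show ?thesis unfolding simX_def by (rule equivclp_sym)
    qed
  qed
  show "xk n m ` (partX n m \<times> UNIV) = orbit n m"
  proof
    show "xk n m ` (partX n m \<times> UNIV) \<subseteq> orbit n m"
      using image_sub_orbit[OF assms(1,2)] by auto
    show "orbit n m \<subseteq> xk n m ` (partX n m \<times> UNIV)"
    proof
      fix L assume "L \<in> orbit n m"
      from orbit_sub_image[OF this assms] obtain lam k where "lam \<in> partX n m" "L = xk n m (lam,k)" by blast
      then show "L \<in> xk n m ` (partX n m \<times> UNIV)" by auto
    qed
  qed
qed

end
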